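(* Under the setting described in the context, the sequence $\{u_n\}_{n\in\mathbb{N}}$ is bounded in $L^\infty(0,T;L^2(0,L))$ for every $T>0$.
   Context: $L>0$. $\Phi\in C(\mathbb{R})\cap C^1(\mathbb{R}\setminus\{\pm1\})$ is constant on $(-\infty,-1]$ and on $[1,\infty)$, convex on $[-1,1]$, decreasing on $[-1,0]$, increasing on $[0,1]$; $u_0\in H^1(0,L)$, $u_1\in L^2(0,L)$. Sequences $\{u_{0,n}\},\{u_{1,n}\}\subset C^\infty([0,L])$, $\{\Phi_n\}\subset C^\infty(\mathbb{R})$ satisfy: $u_{0,n}\to u_0$ in $H^1(0,L)$, $u_{1,n}\to u_1$ in $L^2(0,L)$, $\Phi_n\to\Phi$ uniformly on $\mathbb{R}$; $\Phi_n'\to\Phi'$ pointwise on $\mathbb{R}$ and uniformly on $\mathbb{R}\setminus((-1-\varepsilon,-1+\varepsilon)\cup(1-\varepsilon,1+\varepsilon))$ for every $\varepsilon>0$; $\Phi_n'(u)=0$ whenever $|u|\ge1+\varepsilon$ (any $\varepsilon>0$, all $n$); there is $C>0$ independent of $n$ with $\|u_{0,n}\|_{H^1}\le C$, $\|u_{1,n}\|_{L^2}\le C$, $0\le\Phi_n,\Phi_n'\le C$; and $u_{0,n}'(0)=u_{0,n}'(L)=u_{1,n}(0)=u_{1,n}(L)=0$. For each $n$, $u_n$ is the (global) classical solution of $\partial_{tt}^2 u_n=\partial_{xx}^2 u_n-\Phi_n'(u_n)$ for $t>0$, $0<x<L$, with $\partial_x u_n(t,0)=\partial_x u_n(t,L)=0$,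 $u_n(0,\cdot)=u_{0,n}$, $\partial_t u_n(0,\cdot)=u_{1,n}$. *)

theory Defs
  imports "HOL-Analysis.Analysis"
begin

definition smooth_fun :: "(real \<Rightarrow> real) \<Rightarrow> bool" where
  "smooth_fun f \<longleftrightarrow> (\<forall>k x. ((deriv ^^ k) f) differentiable (at x))"

definition smooth_on_interval :: "real \<Rightarrow> real \<Rightarrow> (real \<Rightarrow> real) \<Rightarrow> bool" where
  "smooth_on_interval a b f \<longleftrightarrow>
     (\<exists>D :: nat \<Rightarrow> real \<Rightarrow> real. (\<forall>x\<in>{a..b}. D 0 x = f x) \<and>
        (\<forall>k. \<forall>x\<in>{a..b}. (D k has_real_derivative D (Suc k) x) (at x within {a..b})))"

definition L2 :: "real \<Rightarrow> (real \<Rightarrow> real) \<Rightarrow> bool" where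
  "L2 L f \<longleftrightarrow> f measurable_on {0..L} \<and> (\<lambda>x. (f x)\<^sup>2) integrable_on {0..L}"

definition L2norm :: "real \<Rightarrow> (real \<Rightarrow> real) \<Rightarrow> real" where
  "L2norm L f = sqrt (integral {0..L} (\<lambda>x. (f x)\<^sup>2))"

definition test_fun :: "real \<Rightarrow> (real \<Rightarrow> real) \<Rightarrow> bool" where
  "test_fun L \<phi> \<longleftrightarrow> smooth_fun \<phi> \<and> closure {x. \<phi> x \<noteq> 0} \<subseteq> {0<..<L}"

definition weak_deriv :: "real \<Rightarrow> (real \<Rightarrow> real) \<Rightarrow> (real \<Rightarrow> real) \<Rightarrow> bool" where
  "weak_deriv L f g \<longleftrightarrow> L2 L f \<and> L2 L g \<and>
     (\<forall>\<phi>. test_fun L \<phi> \<longrightarrow>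
        integral {0..L} (\<lambda>x. f x * deriv \<phi> x) = - integral {0..L} (\<lambda>x. g x * \<phi> x))"

definition H1 :: "real \<Rightarrow> (real \<Rightarrow> real) \<Rightarrow> bool" where
  "H1 L f \<longleftrightarrow> (\<exists>g. weak_deriv L f g)"

definition H1norm :: "real \<Rightarrow> (real \<Rightarrow> real) \<Rightarrow> real" where
  "H1norm L f = sqrt ((L2norm L f)\<^sup>2 + (L2norm L (SOME g. weak_deriv L f g))\<^sup>2)"

text \<open>Global classical solution of  u_tt = u_xx - F'(u)  on (0,\<infinity>)\<times>(0,L) with homogeneous
  Neumann boundary conditions and initial data v0, v1:
  u is C^1 on [0,\<infinity>)\<times>[0,L] and C^2 on (0,\<infinity>)\<times>(0,L).  u t x = u(t,x).\<close>
definition classical_solution ::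
  "real \<Rightarrow> (real \<Rightarrow> real) \<Rightarrow> (real \<Rightarrow> real) \<Rightarrow> (real \<Rightarrow> real) \<Rightarrow> (real \<Rightarrow> real \<Rightarrow> real) \<Rightarrow> bool" where
  "classical_solution L F v0 v1 u \<longleftrightarrow>
    (\<exists>ut ux utt uxx utx uxt :: real \<Rightarrow> real \<Rightarrow> real.
      continuous_on ({0..} \<times> {0..L}) (\<lambda>(t,x). u t x) \<and>
      continuous_on ({0..} \<times> {0..L}) (\<lambda>(t,x). ut t x) \<and>
      continuous_on ({0..} \<times> {0..L}) (\<lambda>(t,x). ux t x) \<and>
      (\<forall>t\<ge>0. \<forall>x\<in>{0..L}.
         ((\<lambda>s. u s x) has_real_derivative ut t x) (at t within {0..}) \<and>
         ((\<lambda>y. u t y) has_real_derivative ux t x) (at x within {0..L})) \<and>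
      (\<forall>t>0. \<forall>x\<in>{0<..<L}.
         ((\<lambda>s. ut s x) has_real_derivative utt t x) (at t) \<and>
         ((\<lambda>y. ux t y) has_real_derivative uxx t x) (at x) \<and>
         ((\<lambda>s. ux s x) has_real_derivative utx t x) (at t) \<and>
         ((\<lambda>y. ut t y) has_real_derivative uxt t x) (at x)) \<and>
      continuous_on ({0<..} \<times> {0<..<L}) (\<lambda>(t,x). utt t x) \<and>
      continuous_on ({0<..} \<times> {0<..<L}) (\<lambda>(t,x). uxx t x) \<and>
      continuous_on ({0<..} \<times> {0<..<L}) (\<lambda>(t,x). utx t x) \<and>
      continuous_on ({0<..} \<times> {0<..<L}) (\<lambda>(t,x). uxt t x) \<and>
      (\<forall>t>0. \<forall>x\<in>{0<..<L}. utt t x = uxx t x - deriv F (u t x)) \<and>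
      (\<forall>t>0. ux t 0 = 0 \<and> ux t L = 0) \<and>
      (\<forall>x\<in>{0..L}. u 0 x = v0 x \<and> ut 0 x = v1 x))"

end

theory Submission
  imports Defs
begin

lemma var_int_eq:
  fixes f :: "real \<Rightarrow> real"
  assumes "continuous_on {0..T} f" "t \<in> {0..T}"
  shows "integral {0..t} f = integral {0..T} (\<lambda>s. f (min s t)) - (T - t) * f t"
proof -
  have c: "continuous_on {0..T} (\<lambda>s. f (min s t))"
    by (rule continuous_on_compose2[OF assms(1)]) (use assms(2) in \<open>auto intro!: continuous_intros\<close>)
  have "integral {0..t} (\<lambda>s. f (min s t)) + integral {t..T} (\<lambda>s. f (min s t)) = integral {0..T} (\<lambda>s. f (min s t))"
    using Henstock_Kurzweil_Integration.integral_combine[where a=0 and c=t and b=T and f="\<lambda>s. f (min s t)"] assms(2) c integrable_continuous_interval by auto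
  moreover have "integral {0..t} (\<lambda>s. f (min s t)) = integral {0..t} f"
    by (rule integral_cong) auto
  moreover have "integral {t..T} (\<lambda>s. f (min s t)) = integral {t..T} (\<lambda>s. f t)"
    by (rule integral_cong) auto
  ultimately show ?thesis using assms(2) by simp
qed

lemma var_int_cont:
  fixes f :: "real \<Rightarrow> real \<Rightarrow> real" and S :: "real set"
  assumes "continuous_on ({0..T} \<times> S) (\<lambda>(s,y). f s y)"
  shows "continuous_on ({0..T} \<times> S) (\<lambda>(t,y). integral {0..t} (\<lambda>s. f s y))"
proof -
  have e: "integral {0..t} (\<lambda>s. f s y) = integral (cbox 0 T) (\<lambda>s. f (min s t) y) - (T - t) * f t y"
    if "(t,y) \<in> {0..T} \<times> S" for t y
  proof -
    have "continuous_on {0..T} (\<lambda>s. f s y)"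
      by (rule continuous_on_compose2[OF assms, of _ "\<lambda>s. (s,y)", simplified]) (use that in \<open>auto intro!: continuous_intros\<close>)
    then show ?thesis using var_int_eq[of T "\<lambda>s. f s y" t] that by simp
  qed
  have c1: "continuous_on (({0..T} \<times> S) \<times> cbox 0 T) (\<lambda>(ty, s). f (min s (fst ty)) (snd ty))"
  proof -
    let ?g = "\<lambda>(ty::real\<times>real,s::real). (min s (fst ty), snd ty)"
    have g: "continuous_on (({0..T} \<times> S) \<times> cbox 0 T) ?g"
      by (auto intro!: continuous_intros simp: case_prod_unfold)
    have sub: "?g ` (({0..T} \<times> S) \<times> cbox 0 T) \<subseteq> {0..T} \<times> S"
      by auto
    have "continuous_on (({0..T} \<times> S) \<times> cbox 0 T) ((\<lambda>(s,y). f s y) \<circ> ?g)"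
      by (rule continuous_on_compose[OF g continuous_on_subset[OF assms sub]])
    then show ?thesis by (simp add: o_def case_prod_unfold)
  qed
  have c2: "continuous_on ({0..T} \<times> S) (\<lambda>ty. integral (cbox 0 T) (\<lambda>s. f (min s (fst ty)) (snd ty)))"
    by (rule integral_continuous_on_param[OF c1])
  have c3: "continuous_on ({0..T} \<times> S) (\<lambda>ty. (T - fst ty) * f (fst ty) (snd ty))"
    using assms by (auto intro!: continuous_intros simp: case_prod_unfold)
  show ?thesis
    by (rule continuous_on_eq[OF continuous_on_diff[OF c2 c3]]) (auto simp: e)
qed

lemma cont_slice1:
  fixes f :: "real \<Rightarrow> real \<Rightarrow> real"
  assumes "continuous_on (A \<times> B) (\<lambda>(t,x). f t x)" "t \<in> A"
  shows "continuous_on B (\<lambda>x. f t x)"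
proof -
  have "continuous_on B (\<lambda>x. (\<lambda>(t,x). f t x) (t, x))"
    by (rule continuous_on_compose2[OF assms(1)]) (use assms(2) in \<open>auto intro!: continuous_intros\<close>)
  then show ?thesis by simp
qed

lemma cont_slice2:
  fixes f :: "real \<Rightarrow> real \<Rightarrow> real"
  assumes "continuous_on (A \<times> B) (\<lambda>(t,x). f t x)" "x \<in> B"
  shows "continuous_on A (\<lambda>t. f t x)"
proof -
  have "continuous_on A (\<lambda>t. (\<lambda>(t,x). f t x) (t, x))"
    by (rule continuous_on_compose2[OF assms(1)]) (use assms(2) in \<open>auto intro!: continuous_intros\<close>)
  then show ?thesis by simp
qed

lemma deriv_within_to_at:
  assumes "(f has_real_derivative D) (at x within S)" "x \<in> U" "open U" "U \<subseteq> S"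
  shows "(f has_real_derivative D) (at x)"
proof -
  have "(f has_real_derivative D) (at x within U)"
    by (rule has_field_derivative_subset[OF assms(1) assms(4)])
  moreover have "at x within U = at x" by (rule at_within_open[OF assms(2,3)])
  ultimately show ?thesis by simp
qed

lemma deriv_int_interior:
  assumes "continuous_on {a..b} f" "t \<in> {a<..<b}"
  shows "((\<lambda>t. integral {a..t} f) has_real_derivative f t) (at t)"
proof -
  have "t \<in> {a..b}" using assms(2) by auto
  from integral_has_real_derivative[OF assms(1) this]
  show ?thesis by (rule deriv_within_to_at[where U="{a<..<b}"]) (use assms(2) in auto)
qed

lemma energy:
  fixes u ut ux utt uxx :: "real \<Rightarrow> real \<Rightarrow> real" and phi :: "real \<Rightarrow> real" and L T C :: real
  assumes L: "L > 0" and T: "T > 0"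
    and cu: "continuous_on ({0..} \<times> {0..L}) (\<lambda>(t,x). u t x)"
    and cut: "continuous_on ({0..} \<times> {0..L}) (\<lambda>(t,x). ut t x)"
    and cux: "continuous_on ({0..} \<times> {0..L}) (\<lambda>(t,x). ux t x)"
    and dt: "\<forall>t\<ge>0. \<forall>x\<in>{0..L}. ((\<lambda>s. u s x) has_real_derivative ut t x) (at t within {0..})"
    and dx: "\<forall>t\<ge>0. \<forall>x\<in>{0..L}. ((\<lambda>y. u t y) has_real_derivative ux t x) (at x within {0..L})"
    and dtt: "\<forall>t>0. \<forall>x\<in>{0<..<L}. ((\<lambda>s. ut s x) has_real_derivative utt t x) (at t)"
    and dxx: "\<forall>t>0. \<forall>x\<in>{0<..<L}. ((\<lambda>y. ux t y) has_real_derivative uxx t x) (at x)"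
    and cutt: "continuous_on ({0<..} \<times> {0<..<L}) (\<lambda>(t,x). utt t x)"
    and eq: "\<forall>t>0. \<forall>x\<in>{0<..<L}. utt t x = uxx t x - phi (u t x)"
    and bc: "\<forall>t>0. ux t 0 = 0 \<and> ux t L = 0"
    and cphi: "continuous_on UNIV phi"
    and bphi: "\<forall>y. \<bar>phi y\<bar> \<le> C"
  shows "\<forall>t\<in>{0..T}. integral {0..L} (\<lambda>x. (u t x)^2) \<le>
     exp T * (integral {0..L} (\<lambda>x. (u 0 x)^2) + 2 * integral {0..L} (\<lambda>x. (ut 0 x)^2) + 2*C^2*T^2*L)"
proof -
  let ?R = "{0..T} \<times> {0..L}"
  have sub: "?R \<subseteq> {0..} \<times> {0..L}" by auto
  have cu': "continuous_on ?R (\<lambda>(t,x). u t x)" using continuous_on_subset[OF cu sub] .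
  have cut': "continuous_on ?R (\<lambda>(t,x). ut t x)" using continuous_on_subset[OF cut sub] .
  have cux': "continuous_on ?R (\<lambda>(t,x). ux t x)" using continuous_on_subset[OF cux sub] .
  have cp: "continuous_on ?R (\<lambda>(t,x). phi (u t x))"
  proof -
    have "continuous_on ?R (\<lambda>z. phi ((\<lambda>(t,x). u t x) z))"
      by (rule continuous_on_compose2[OF cphi cu']) simp
    then show ?thesis by (simp add: case_prod_unfold)
  qed
  define g where "g t y = integral {0..t} (\<lambda>s. phi (u s y))" for t y
  define h where "h t y = integral {0..t} (\<lambda>s. ux s y)" for t y
  define G where "G t y = ut t y - ut 0 y + g t y" for t y
  have cg: "continuous_on ?R (\<lambda>(t,y). g t y)" unfolding g_def by (rule var_int_cont[OF cp])
  have ch: "continuous_on ?R (\<lambda>(t,y). h t y)" unfolding h_def by (rule var_int_cont[OF cux'])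
  have c0: "continuous_on ?R (\<lambda>z. (\<lambda>(t,x). ut t x) (0, snd z))"
    by (rule continuous_on_compose2[OF cut']) (use T in \<open>auto intro!: continuous_intros\<close>)
  have cG: "continuous_on ?R (\<lambda>(t,y). G t y)"
  proof -
    have "continuous_on ?R (\<lambda>z. (\<lambda>(t,y). ut t y) z - (\<lambda>z. (\<lambda>(t,x). ut t x) (0, snd z)) z + (\<lambda>(t,y). g t y) z)"
      by (intro continuous_on_add continuous_on_diff cut' c0 cg)
    then show ?thesis by (rule continuous_on_eq) (auto simp: G_def)
  qed
  have dg: "((\<lambda>t. g t y) has_real_derivative phi (u t y)) (at t)" if "t \<in> {0<..<T}" "y \<in> {0..L}" for t y
    unfolding g_def by (rule deriv_int_interior[OF cont_slice2[OF cp that(2)] that(1)])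
  have dh: "((\<lambda>t. h t y) has_real_derivative ux t y) (at t)" if "t \<in> {0<..<T}" "y \<in> {0..L}" for t y
    unfolding h_def by (rule deriv_int_interior[OF cont_slice2[OF cux' that(2)] that(1)])
  have g0: "g 0 y = 0" for y by (simp add: g_def)
  have h0: "h 0 y = 0" for y by (simp add: h_def)
  have K: "h t b - h t a = integral {a..b} (G t)" if t: "t\<in>{0..T}" and ab: "0<a" "a\<le>b" "b<L" for t a b
  proof -
    define F where "F t = integral {a..b} (G t) - (h t b - h t a)" for t
    have subab: "{0..T} \<times> {a..b} \<subseteq> ?R" using ab by auto
    have cF: "continuous_on {0..T} F"
    proof -
      have "continuous_on ({0..T} \<times> cbox a b) (\<lambda>(t,y). G t y)"
        using continuous_on_subset[OF cG subab] by simp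
      then have c1: "continuous_on {0..T} (\<lambda>t. integral (cbox a b) (G t))"
        by (rule integral_continuous_on_param)
      have c2: "continuous_on {0..T} (\<lambda>t. h t b)" by (rule cont_slice2[OF ch]) (use ab in auto)
      have c3: "continuous_on {0..T} (\<lambda>t. h t a)" by (rule cont_slice2[OF ch]) (use ab in auto)
      show ?thesis unfolding F_def using continuous_on_diff[OF c1 continuous_on_diff[OF c2 c3]] by simp
    qed
    have dF: "(F has_real_derivative 0) (at s)" if s: "s \<in> {0<..<T}" for s
    proof -
      let ?U = "{s/2<..<T}"
      have sU: "s \<in> ?U" using s by auto
      have Usub: "?U \<subseteq> {0<..<T}" using s by auto
      have d1: "((\<lambda>t. integral (cbox a b) (G t)) has_field_derivative
                 integral (cbox a b) (\<lambda>y. utt s y + phi (u s y))) (at s within ?U)"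
      proof (rule leibniz_rule_field_derivative[where fx="\<lambda>t y. utt t y + phi (u t y)"])
        fix x y assume x: "x \<in> ?U" and y: "y \<in> cbox a b"
        have x0: "x \<in> {0<..<T}" using x Usub by blast
        have y0: "y \<in> {0<..<L}" "y \<in> {0..L}" using y ab by auto
        have "((\<lambda>x. ut x y - ut 0 y + g x y) has_real_derivative utt x y - 0 + phi (u x y)) (at x)"
          using dtt x0 y0 by (intro DERIV_add DERIV_diff DERIV_const dg) auto
        then show "((\<lambda>x. G x y) has_field_derivative utt x y + phi (u x y)) (at x within ?U)"
          unfolding G_def by (simp add: has_field_derivative_at_within)
      next
        fix x assume x: "x \<in> ?U"
        have "continuous_on {a..b} (G x)"
          by (rule continuous_on_subset[OF cont_slice1[OF cG]]) (use x Usub ab in auto)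
        then show "G x integrable_on cbox a b" by (simp add: integrable_continuous_interval)
      next
        have s1: "?U \<times> cbox a b \<subseteq> {0<..} \<times> {0<..<L}" using ab Usub by auto
        have s2: "?U \<times> cbox a b \<subseteq> ?R" using ab Usub by auto
        have "continuous_on (?U \<times> cbox a b) (\<lambda>z. (\<lambda>(t,y). utt t y) z + (\<lambda>(t,x). phi (u t x)) z)"
          by (intro continuous_on_add continuous_on_subset[OF cutt s1] continuous_on_subset[OF cp s2])
        then show "continuous_on (?U \<times> cbox a b) (\<lambda>(t, y). utt t y + phi (u t y))"
          by (rule continuous_on_eq) auto
      qed (use sU in auto)
      have "at s within ?U = at s" by (rule at_within_open) (use sU in auto)
      with d1 have d1': "((\<lambda>t. integral {a..b} (G t)) has_real_derivative
                 integral {a..b} (\<lambda>y. utt s y + phi (u s y))) (at s)" by simp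
      have "integral {a..b} (\<lambda>y. utt s y + phi (u s y)) = integral {a..b} (\<lambda>y. uxx s y)"
        by (rule integral_cong) (use eq s ab in auto)
      also have "\<dots> = ux s b - ux s a"
      proof (rule integral_unique, rule fundamental_theorem_of_calculus)
        show "a \<le> b" by fact
        fix y assume "y \<in> {a..b}"
        then have "y \<in> {0<..<L}" using ab by auto
        then have "((\<lambda>y. ux s y) has_real_derivative uxx s y) (at y)" using dxx s by auto
        then show "((\<lambda>y. ux s y) has_vector_derivative uxx s y) (at y within {a..b})"
          by (simp add: has_real_derivative_iff_has_vector_derivative has_vector_derivative_at_within)
      qed
      finally have e: "integral {a..b} (\<lambda>y. utt s y + phi (u s y)) = ux s b - ux s a" .
      have "(F has_real_derivative integral {a..b} (\<lambda>y. utt s y + phi (u s y)) - (ux s b - ux s a)) (at s)"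
        unfolding F_def using s ab by (intro DERIV_diff d1' dh) auto
      then show ?thesis using e by simp
    qed
    have "F t = F 0"
    proof (cases "t = 0")
      case False
      then have "0 < t" using t by auto
      have c: "continuous_on {0..t} F" by (rule continuous_on_subset[OF cF]) (use t in auto)
      have d: "(F has_real_derivative 0) (at x)" if "0 < x" "x < t" for x
        using dF t that by auto
      show ?thesis using DERIV_isconst_end[of 0 t F, OF \<open>0 < t\<close> c d] by simp
    qed simp
    moreover have "F 0 = 0" unfolding F_def G_def by (simp add: g0 h0)
    ultimately show ?thesis unfolding F_def by simp
  qed
  have dhx: "((\<lambda>y. h t y) has_real_derivative G t x) (at x)" if t: "t\<in>{0..T}" and x: "x \<in> {0<..<L}" for t x
  proof -
    define a where "a = x/2"
    define b where "b = (x+L)/2"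
    have ab: "0 < a" "a < x" "x < b" "b < L" using x by (auto simp: a_def b_def)
    have "continuous_on {a..b} (G t)"
      by (rule continuous_on_subset[OF cont_slice1[OF cG t]]) (use ab in auto)
    then have d1: "((\<lambda>y. integral {a..y} (G t)) has_real_derivative G t x) (at x)"
      by (rule deriv_int_interior) (use ab in auto)
    have d2: "((\<lambda>y. h t a + integral {a..y} (G t)) has_real_derivative 0 + G t x) (at x)"
      by (intro DERIV_add DERIV_const d1)
    show ?thesis
    proof (rule has_field_derivative_transform_within_open[of _ _ _ "{a<..<b}"])
      show "((\<lambda>y. h t a + integral {a..y} (G t)) has_real_derivative G t x) (at x)" using d2 by simp
      show "x \<in> {a<..<b}" using ab by auto
      fix y assume "y \<in> {a<..<b}"
      then show "h t a + integral {a..y} (G t) = h t y" using K[OF t, of a y] ab by auto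
    qed simp
  qed
  have hbd: "h t 0 = 0 \<and> h t L = 0" if "t \<ge> 0" for t
  proof -
    have "h t y = 0" if "y = 0 \<or> y = L" for y
    proof -
      have "integral {0..t} (\<lambda>s. ux s y) = integral {0..t} (\<lambda>s. 0)"
        by (rule integral_spike[of "{0}"]) (use bc that in auto)
      then show ?thesis by (simp add: h_def)
    qed
    then show ?thesis by auto
  qed
  have ibp: "integral {0..L} (\<lambda>x. G t x * u t x + h t x * ux t x) = 0" if t: "t\<in>{0..T}" for t
  proof -
    have "((\<lambda>x. G t x * u t x + h t x * ux t x) has_integral (h t L * u t L - h t 0 * u t 0)) {0..L}"
    proof (rule fundamental_theorem_of_calculus_interior)
      show "0 \<le> L" using L by simp
      show "continuous_on {0..L} (\<lambda>x. h t x * u t x)"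
        by (intro continuous_on_mult cont_slice1[OF ch t] cont_slice1[OF cu' t])
      fix x assume x: "x \<in> {0<..<L}"
      have du: "((\<lambda>y. u t y) has_real_derivative ux t x) (at x)"
        by (rule deriv_within_to_at[where U="{0<..<L}" and S="{0..L}"]) (use dx t x in auto)
      have "((\<lambda>x. h t x * u t x) has_real_derivative G t x * u t x + ux t x * h t x) (at x)"
        by (rule DERIV_mult[OF dhx[OF t x] du])
      then show "((\<lambda>x. h t x * u t x) has_vector_derivative G t x * u t x + h t x * ux t x) (at x)"
        by (simp add: has_real_derivative_iff_has_vector_derivative mult.commute)
    qed
    then show ?thesis using hbd[of t] t by (simp add: integral_unique)
  qed
  have C0: "C \<ge> 0" using bphi by (meson abs_ge_zero order_trans)
  have gb: "(g t y)^2 \<le> (C*T)^2" if t: "t\<in>{0..T}" and y: "y\<in>{0..L}" for t y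
  proof -
    have ci: "(\<lambda>s. phi (u s y)) integrable_on {0..t}"
      by (rule integrable_continuous_interval, rule continuous_on_subset[OF cont_slice2[OF cp y]]) (use t in auto)
    have "integral {0..t} (\<lambda>s. phi (u s y)) \<le> integral {0..t} (\<lambda>s. C)"
      by (rule integral_le[OF ci]) (use bphi in \<open>auto simp: abs_le_iff\<close>)
    moreover have "integral {0..t} (\<lambda>s. -C) \<le> integral {0..t} (\<lambda>s. phi (u s y))"
    proof (rule integral_le[OF _ ci])
      fix s show "- C \<le> phi (u s y)" using bphi[rule_format, of "u s y"] by linarith
    qed auto
    ultimately have "\<bar>g t y\<bar> \<le> C * t" using t by (auto simp: g_def abs_le_iff mult.commute)
    also have "\<dots> \<le> C * T" using t C0 by (auto intro: mult_left_mono)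
    finally have "\<bar>g t y\<bar> \<le> C*T" .
    then show ?thesis by (metis abs_ge_zero power2_abs power_mono)
  qed
  define Q where "Q t = integral {0..L} (\<lambda>x. (u t x)^2 + (h t x)^2)" for t
  define I1 where "I1 = integral {0..L} (\<lambda>x. (ut 0 x)^2)"
  define K where "K = 2 * I1 + 2*C^2*T^2*L"
  have c0': "continuous_on {0..L} (\<lambda>x. ut 0 x)" by (rule cont_slice1[OF cut']) (use T in auto)
  have I1: "I1 \<ge> 0" unfolding I1_def
    by (rule integral_nonneg) (auto intro!: integrable_continuous_interval continuous_intros c0')
  have K0: "K \<ge> 0" unfolding K_def using I1 L by auto
  have cQ: "continuous_on {0..T} Q"
  proof -
    have "continuous_on ?R (\<lambda>z. ((\<lambda>(t,x). u t x) z)^2 + ((\<lambda>(t,x). h t x) z)^2)"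
      by (intro continuous_intros cu' ch)
    then have "continuous_on ({0..T} \<times> {0..L}) (\<lambda>(t,x). (u t x)^2 + (h t x)^2)"
      by (rule continuous_on_eq) auto
    then have "continuous_on ({0..T} \<times> cbox 0 L) (\<lambda>(t,x). (u t x)^2 + (h t x)^2)"
      by simp
    then have "continuous_on {0..T} (\<lambda>t. integral (cbox 0 L) (\<lambda>x. (u t x)^2 + (h t x)^2))"
      by (rule integral_continuous_on_param)
    then show ?thesis unfolding Q_def by simp
  qed
  have dQ: "(Q has_real_derivative integral {0..L} (\<lambda>x. 2*u s x*ut s x + 2*h s x*ux s x)) (at s)"
    if s: "s \<in> {0<..<T}" for s
  proof -
    let ?U = "{0<..<T}"
    have d1: "((\<lambda>t. integral (cbox 0 L) (\<lambda>x. (u t x)^2 + (h t x)^2)) has_field_derivative integral (cbox 0 L) (\<lambda>x. 2*u s x*ut s x + 2*h s x*ux s x)) (at s within ?U)"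
    proof (rule leibniz_rule_field_derivative[where fx="\<lambda>t x. 2*u t x*ut t x + 2*h t x*ux t x"])
      fix x y assume x: "x \<in> ?U" and y: "y \<in> cbox 0 L"
      have du: "((\<lambda>t. u t y) has_real_derivative ut x y) (at x)"
        by (rule deriv_within_to_at[where U="{0<..}" and S="{0..}"]) (use dt x y in auto)
      have "((\<lambda>t. u t y * u t y + h t y * h t y) has_real_derivative
             (ut x y * u x y + ut x y * u x y) + (ux x y * h x y + ux x y * h x y)) (at x)"
      proof -
        have y': "y \<in> {0..L}" using y by simp
        show ?thesis by (rule DERIV_add[OF DERIV_mult[OF du du] DERIV_mult[OF dh[OF x y'] dh[OF x y']]])
      qed
      moreover have "(\<lambda>t. u t y * u t y + h t y * h t y) = (\<lambda>t. (u t y)^2 + (h t y)^2)"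
        by (simp add: power2_eq_square)
      moreover have "(ut x y * u x y + ut x y * u x y) + (ux x y * h x y + ux x y * h x y) = 2*u x y*ut x y + 2*h x y*ux x y"
        by (simp add: algebra_simps)
      ultimately have "((\<lambda>t. (u t y)^2 + (h t y)^2) has_real_derivative 2*u x y*ut x y + 2*h x y*ux x y) (at x)"
        by (simp only:)
      then show "((\<lambda>t. (u t y)^2 + (h t y)^2) has_field_derivative 2*u x y*ut x y + 2*h x y*ux x y) (at x within ?U)"
        by (rule has_field_derivative_at_within)
    next
      fix x assume x: "x \<in> ?U"
      have x': "x \<in> {0..T}" using x by auto
      have "continuous_on {0..L} (\<lambda>y. (u x y)^2 + (h x y)^2)"
        by (rule continuous_on_add[OF continuous_on_power[OF cont_slice1[OF cu' x']] continuous_on_power[OF cont_slice1[OF ch x']]])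
      then show "(\<lambda>y. (u x y)^2 + (h x y)^2) integrable_on cbox 0 L"
        by (simp add: integrable_continuous_interval)
    next
      have s2: "?U \<times> cbox 0 L \<subseteq> ?R" by auto
      have "continuous_on (?U \<times> cbox 0 L) (\<lambda>z. 2*(\<lambda>(t,x). u t x) z*(\<lambda>(t,x). ut t x) z + 2*(\<lambda>(t,x). h t x) z*(\<lambda>(t,x). ux t x) z)"
        by (intro continuous_intros continuous_on_subset[OF cu' s2] continuous_on_subset[OF cut' s2]
              continuous_on_subset[OF ch s2] continuous_on_subset[OF cux' s2])
      then show "continuous_on (?U \<times> cbox 0 L) (\<lambda>(t, x). 2*u t x*ut t x + 2*h t x*ux t x)"
        by (rule continuous_on_eq) auto
    qed (use s in auto)
    have "at s within ?U = at s" by (rule at_within_open) (use s in auto)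
    with d1 show ?thesis by (simp add: Q_def[abs_def])
  qed
  have dQb: "integral {0..L} (\<lambda>x. 2*u s x*ut s x + 2*h s x*ux s x) \<le> Q s + K"
    if s: "s \<in> {0<..<T}" for s
  proof -
    have s': "s \<in> {0..T}" using s by auto
    have a1: "continuous_on {0..L} (\<lambda>x. u s x)" by (rule cont_slice1[OF cu' s'])
    have a2: "continuous_on {0..L} (\<lambda>x. ut s x)" by (rule cont_slice1[OF cut' s'])
    have a3: "continuous_on {0..L} (\<lambda>x. h s x)" by (rule cont_slice1[OF ch s'])
    have a4: "continuous_on {0..L} (\<lambda>x. ux s x)" by (rule cont_slice1[OF cux' s'])
    have a5: "continuous_on {0..L} (\<lambda>x. G s x)" by (rule cont_slice1[OF cG s'])
    have a6: "continuous_on {0..L} (\<lambda>x. g s x)" by (rule cont_slice1[OF cg s'])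
    have i1: "(\<lambda>x. G s x * u s x + h s x * ux s x) integrable_on {0..L}"
      by (rule integrable_continuous_interval) (intro continuous_intros a1 a3 a4 a5)
    have i2: "(\<lambda>x. 2*u s x*(ut 0 x - g s x)) integrable_on {0..L}"
      by (rule integrable_continuous_interval) (intro continuous_intros a1 a6 c0')
    have i3: "(\<lambda>x. (u s x)^2 + (h s x)^2) integrable_on {0..L}"
      by (rule integrable_continuous_interval) (intro continuous_intros a1 a3)
    have i4: "(\<lambda>x. 2*(ut 0 x)^2 + 2*(C*T)^2) integrable_on {0..L}"
      by (rule integrable_continuous_interval) (intro continuous_intros c0')
    have i5: "(\<lambda>x. (ut 0 x)^2) integrable_on {0..L}"
      by (rule integrable_continuous_interval) (intro continuous_intros c0')
    have "integral {0..L} (\<lambda>x. 2*u s x*ut s x + 2*h s x*ux s x)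
        = integral {0..L} (\<lambda>x. 2*(G s x * u s x + h s x * ux s x) + 2*u s x*(ut 0 x - g s x))"
      by (rule integral_cong) (simp add: G_def algebra_simps)
    also have "\<dots> = 2 * integral {0..L} (\<lambda>x. G s x * u s x + h s x * ux s x) + integral {0..L} (\<lambda>x. 2*u s x*(ut 0 x - g s x))"
    proof -
      have e: "integral {0..L} (\<lambda>x. 2*(G s x * u s x + h s x * ux s x) + 2*u s x*(ut 0 x - g s x))
          = integral {0..L} (\<lambda>x. 2*(G s x * u s x + h s x * ux s x)) + integral {0..L} (\<lambda>x. 2*u s x*(ut 0 x - g s x))"
        by (rule integral_add[OF integrable_on_mult_right[OF i1] i2])
      have m: "integral {0..L} (\<lambda>x. 2*(G s x * u s x + h s x * ux s x)) = 2 * integral {0..L} (\<lambda>x. G s x * u s x + h s x * ux s x)"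
        by (rule integral_mult_right)
      show ?thesis by (simp only: e m)
    qed
    also have "\<dots> = integral {0..L} (\<lambda>x. 2*u s x*(ut 0 x - g s x))" using ibp[OF s'] by simp
    also have "\<dots> \<le> integral {0..L} (\<lambda>x. ((u s x)^2 + (h s x)^2) + (2*(ut 0 x)^2 + 2*(C*T)^2))"
    proof (rule integral_le[OF i2 integrable_add[OF i3 i4]])
      fix x assume x: "x \<in> {0..L}"
      have g2: "(g s x)^2 \<le> (C*T)^2" by (rule gb[OF s' x])
      have p1: "0 \<le> (u s x - (ut 0 x - g s x))^2" by simp
      have p2: "0 \<le> (ut 0 x + g s x)^2" by simp
      have p3: "0 \<le> (h s x)^2" by simp
      show "2*u s x*(ut 0 x - g s x) \<le> ((u s x)^2 + (h s x)^2) + (2*(ut 0 x)^2 + 2*(C*T)^2)"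
        using g2 p1 p2 apply (simp add: power2_eq_square algebra_simps)
        using zero_le_square[of "h s x"] by linarith
    qed
    also have "\<dots> = Q s + K"
    proof -
      have "integral {0..L} (\<lambda>x. 2*(ut 0 x)^2 + 2*(C*T)^2) = 2 * I1 + 2*(C*T)^2 * L"
        using integral_add[OF integrable_on_mult_right[OF i5, of 2] integrable_const_ivl[of "2*(C*T)^2" 0 L]] L
        by (simp add: I1_def)
      then show ?thesis
        using integral_add[OF i3 i4] by (simp add: Q_def K_def power_mult_distrib)
    qed
    finally show ?thesis .
  qed
  define R where "R t = exp (-t) * (Q t + K)" for t
  have Rle: "R t \<le> R 0" if t: "t \<in> {0..T}" for t
  proof (cases "t = 0")
    case False
    then have t0: "0 < t" using t by auto
    have cQt: "continuous_on {0..t} Q" by (rule continuous_on_subset[OF cQ]) (use t in auto)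
    have cR: "continuous_on {0..t} R" unfolding R_def
      by (intro continuous_intros cQt)
    have "R t \<le> R 0"
    proof (rule DERIV_nonpos_imp_decreasing_open[of 0 t R])
      show "0 \<le> t" using t0 by simp
      show "continuous_on {0..t} R" by (rule cR)
      fix x assume x: "0 < x" "x < t"
      then have xT: "x \<in> {0<..<T}" using t by auto
      have dexp: "((\<lambda>t. exp (-t)) has_real_derivative exp (-x) * (-1)) (at x)"
        by (rule DERIV_chain2[OF DERIV_exp DERIV_minus[OF DERIV_ident]])
      let ?Q' = "integral {0..L} (\<lambda>x'. 2*u x x'*ut x x' + 2*h x x'*ux x x')"
      have "(R has_real_derivative exp (-x) * (-1) * (Q x + K) + (?Q' + 0) * exp (-x)) (at x)"
        unfolding R_def[abs_def] by (rule DERIV_mult[OF dexp DERIV_add[OF dQ[OF xT] DERIV_const]])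
      moreover have "exp (-x) * (-1) * (Q x + K) + (?Q' + 0) * exp (-x) = exp (-x) * (?Q' - (Q x + K))"
        by (simp add: algebra_simps)
      moreover have "exp (-x) * (?Q' - (Q x + K)) \<le> 0"
        using dQb[OF xT] by (intro mult_nonneg_nonpos) auto
      ultimately show "\<exists>y. (R has_real_derivative y) (at x) \<and> y \<le> 0" by auto
    qed
    then show ?thesis .
  qed simp
  have Q0: "Q 0 = integral {0..L} (\<lambda>x. (u 0 x)^2)" by (simp add: Q_def h0)
  have cu0: "continuous_on {0..L} (\<lambda>x. u 0 x)" by (rule cont_slice1[OF cu']) (use T in auto)
  have Q0nn: "Q 0 \<ge> 0" unfolding Q0
    by (rule integral_nonneg) (auto intro!: integrable_continuous_interval continuous_intros cu0)
  show ?thesis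
  proof
    fix t assume t: "t \<in> {0..T}"
    have "exp (-t) * (Q t + K) \<le> Q 0 + K" using Rle[OF t] by (simp add: R_def)
    then have "exp t * (exp (-t) * (Q t + K)) \<le> exp t * (Q 0 + K)"
      by (rule mult_left_mono) simp
    moreover have "exp t * (exp (-t) * (Q t + K)) = Q t + K"
      by (simp add: mult.assoc[symmetric] exp_minus_inverse)
    ultimately have "Q t + K \<le> exp t * (Q 0 + K)" by simp
    also have "\<dots> \<le> exp T * (Q 0 + K)"
      using t Q0nn K0 by (intro mult_right_mono) auto
    finally have qb: "Q t \<le> exp T * (Q 0 + K) - K" by simp
    have cut1: "continuous_on {0..L} (\<lambda>x. u t x)" by (rule cont_slice1[OF cu' t])
    have cht: "continuous_on {0..L} (\<lambda>x. h t x)" by (rule cont_slice1[OF ch t])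
    have "integral {0..L} (\<lambda>x. (u t x)^2) \<le> Q t" unfolding Q_def
      by (rule integral_le) (auto intro!: integrable_continuous_interval continuous_intros cut1 cht)
    with qb K0 show "integral {0..L} (\<lambda>x. (u t x)^2) \<le>
     exp T * (integral {0..L} (\<lambda>x. (u 0 x)^2) + 2 * integral {0..L} (\<lambda>x. (ut 0 x)^2) + 2*C^2*T^2*L)"
      unfolding Q0[symmetric] K_def[symmetric] I1_def[symmetric] by (simp add: K_def add.assoc)
  qed
qed

lemma int_sq_nonneg: "integral S (\<lambda>x. (f x)^2) \<ge> (0::real)"
proof (cases "(\<lambda>x. (f x)^2) integrable_on S")
  case True then show ?thesis by (rule integral_nonneg) simp
next
  case False then show ?thesis by (simp add: not_integrable_integral)
qed

theorem lemma3p4: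
  fixes L C :: real
    and \<Phi> :: "real \<Rightarrow> real"
    and u0 u1 :: "real \<Rightarrow> real"
    and u0n u1n :: "nat \<Rightarrow> real \<Rightarrow> real"
    and \<Phi>n :: "nat \<Rightarrow> real \<Rightarrow> real"
    and u :: "nat \<Rightarrow> real \<Rightarrow> real \<Rightarrow> real"
  assumes L_pos: "L > 0"
    and Phi_cont: "continuous_on UNIV \<Phi>"
    and Phi_diff: "\<forall>x. x \<notin> {-1, 1} \<longrightarrow> \<Phi> differentiable (at x)"
    and Phi_C1: "continuous_on (UNIV - {-1, 1}) (deriv \<Phi>)"
    and Phi_const_left: "\<forall>x. x \<le> -1 \<longrightarrow> \<Phi> x = \<Phi> (-1)"
    and Phi_const_right: "\<forall>x. x \<ge> 1 \<longrightarrow> \<Phi> x = \<Phi> 1"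
    and Phi_convex: "convex_on {-1..1} \<Phi>"
    and Phi_decr: "\<forall>x y. -1 \<le> x \<longrightarrow> x \<le> y \<longrightarrow> y \<le> 0 \<longrightarrow> \<Phi> y \<le> \<Phi> x"
    and Phi_incr: "\<forall>x y. 0 \<le> x \<longrightarrow> x \<le> y \<longrightarrow> y \<le> 1 \<longrightarrow> \<Phi> x \<le> \<Phi> y"
    and u0_H1: "H1 L u0"
    and u1_L2: "L2 L u1"
    and u0n_smooth: "\<forall>n. smooth_on_interval 0 L (u0n n)"
    and u1n_smooth: "\<forall>n. smooth_on_interval 0 L (u1n n)"
    and Phin_smooth: "\<forall>n. smooth_fun (\<Phi>n n)"
    and u0n_conv: "(\<lambda>n. H1norm L (\<lambda>x. u0n n x - u0 x)) \<longlonglongrightarrow> 0"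
    and u1n_conv: "(\<lambda>n. L2norm L (\<lambda>x. u1n n x - u1 x)) \<longlonglongrightarrow> 0"
    and Phin_unif: "uniform_limit UNIV \<Phi>n \<Phi> sequentially"
    and Phin'_pointwise: "\<forall>x. x \<notin> {-1, 1} \<longrightarrow> (\<lambda>n. deriv (\<Phi>n n) x) \<longlonglongrightarrow> deriv \<Phi> x"
    and Phin'_unif: "\<forall>\<epsilon>>0. uniform_limit (UNIV - ({-1-\<epsilon><..<-1+\<epsilon>} \<union> {1-\<epsilon><..<1+\<epsilon>}))
                              (\<lambda>n. deriv (\<Phi>n n)) (deriv \<Phi>) sequentially"
    and Phin'_zero: "\<forall>\<epsilon>>0. \<forall>n x. \<bar>x\<bar> \<ge> 1 + \<epsilon> \<longrightarrow> deriv (\<Phi>n n) x = 0"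
    and C_pos: "C > 0"
    and u0n_bound: "\<forall>n. H1norm L (u0n n) \<le> C"
    and u1n_bound: "\<forall>n. L2norm L (u1n n) \<le> C"
    and Phin_bound: "\<forall>n x. 0 \<le> \<Phi>n n x \<and> \<Phi>n n x \<le> C"
    and Phin'_bound: "\<forall>n x. \<bar>deriv (\<Phi>n n) x\<bar> \<le> C"
    and u0n_neumann: "\<forall>n. (u0n n has_real_derivative 0) (at 0 within {0..L}) \<and>
                          (u0n n has_real_derivative 0) (at L within {0..L})"
    and u1n_bc: "\<forall>n. u1n n 0 = 0 \<and> u1n n L = 0"
    and u_sol: "\<forall>n. classical_solution L (\<Phi>n n) (u0n n) (u1n n) (u n)"
  shows "\<forall>T>0. \<exists>M. \<forall>n. \<forall>t\<in>{0..T}. L2norm L (u n t) \<le> M"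
proof (intro allI impI)
  fix T :: real assume T: "T > 0"
  define M where "M = sqrt (exp T * (C^2 + 2 * C^2 + 2*C^2*T^2*L))"
  show "\<exists>M. \<forall>n. \<forall>t\<in>{0..T}. L2norm L (u n t) \<le> M"
  proof (intro exI allI ballI)
    fix n t assume t: "t \<in> {0..T}"
    obtain ut ux utt uxx utx uxt :: "real \<Rightarrow> real \<Rightarrow> real" where
      cu: "continuous_on ({0..} \<times> {0..L}) (\<lambda>(t,x). u n t x)" and
      cut: "continuous_on ({0..} \<times> {0..L}) (\<lambda>(t,x). ut t x)" and
      cux: "continuous_on ({0..} \<times> {0..L}) (\<lambda>(t,x). ux t x)" and
      d1: "\<forall>t\<ge>0. \<forall>x\<in>{0..L}.
         ((\<lambda>s. u n s x) has_real_derivative ut t x) (at t within {0..}) \<and>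
         ((\<lambda>y. u n t y) has_real_derivative ux t x) (at x within {0..L})" and
      d2: "\<forall>t>0. \<forall>x\<in>{0<..<L}.
         ((\<lambda>s. ut s x) has_real_derivative utt t x) (at t) \<and>
         ((\<lambda>y. ux t y) has_real_derivative uxx t x) (at x) \<and>
         ((\<lambda>s. ux s x) has_real_derivative utx t x) (at t) \<and>
         ((\<lambda>y. ut t y) has_real_derivative uxt t x) (at x)" and
      cutt: "continuous_on ({0<..} \<times> {0<..<L}) (\<lambda>(t,x). utt t x)" and
      eq: "\<forall>t>0. \<forall>x\<in>{0<..<L}. utt t x = uxx t x - deriv (\<Phi>n n) (u n t x)" and
      bc: "\<forall>t>0. ux t 0 = 0 \<and> ux t L = 0" and
      ic: "\<forall>x\<in>{0..L}. u n 0 x = u0n n x \<and> ut 0 x = u1n n x"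
      using u_sol[rule_format, of n] unfolding classical_solution_def by blast
    have cphi: "continuous_on UNIV (deriv (\<Phi>n n))"
    proof (rule continuous_at_imp_continuous_on, rule ballI)
      fix x :: real
      have "((deriv ^^ 1) (\<Phi>n n)) differentiable (at x)"
        using Phin_smooth unfolding smooth_fun_def by blast
      then have "deriv (\<Phi>n n) differentiable (at x)" by simp
      then show "isCont (deriv (\<Phi>n n)) x" by (rule differentiable_imp_continuous_within)
    qed
    have E: "\<forall>t\<in>{0..T}. integral {0..L} (\<lambda>x. (u n t x)^2) \<le>
      exp T * (integral {0..L} (\<lambda>x. (u n 0 x)^2) + 2 * integral {0..L} (\<lambda>x. (ut 0 x)^2) + 2*C^2*T^2*L)"
      by (rule energy[where utt=utt and uxx=uxx and phi="deriv (\<Phi>n n)"])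
         (use L_pos T cu cut cux d1 d2 cutt eq bc cphi Phin'_bound in auto)
    have e0: "integral {0..L} (\<lambda>x. (u n 0 x)^2) = integral {0..L} (\<lambda>x. (u0n n x)^2)"
      by (rule integral_cong) (use ic in auto)
    have e1: "integral {0..L} (\<lambda>x. (ut 0 x)^2) = integral {0..L} (\<lambda>x. (u1n n x)^2)"
      by (rule integral_cong) (use ic in auto)
    have sqb: "I \<le> C^2" if "sqrt I \<le> C" "I \<ge> 0" for I
    proof -
      have "(sqrt I)^2 \<le> C^2" using that by (intro power_mono) auto
      then show ?thesis using that by simp
    qed
    have b0: "integral {0..L} (\<lambda>x. (u0n n x)^2) \<le> C^2"
    proof (rule sqb[OF _ int_sq_nonneg])
      have "L2norm L (u0n n) \<le> H1norm L (u0n n)"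
        unfolding H1norm_def by (rule real_le_rsqrt) (simp add: power2_eq_square)
      with u0n_bound show "sqrt (integral {0..L} (\<lambda>x. (u0n n x)^2)) \<le> C"
        unfolding L2norm_def by (meson order_trans)
    qed
    have b1: "integral {0..L} (\<lambda>x. (u1n n x)^2) \<le> C^2"
      by (rule sqb[OF _ int_sq_nonneg]) (use u1n_bound in \<open>simp add: L2norm_def\<close>)
    have "integral {0..L} (\<lambda>x. (u n t x)^2) \<le> exp T * (C^2 + 2 * C^2 + 2*C^2*T^2*L)"
      using E[rule_format, OF t] b0 b1 unfolding e0 e1
      by (smt (verit) exp_gt_zero mult_left_mono)
    then show "L2norm L (u n t) \<le> M"
      unfolding L2norm_def M_def by (rule real_sqrt_le_mono)
  qed
qed

end
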